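(* Let $U_1,\dots,U_{d-1}$ be iid uniform on $[0,1]$ and $q\ge1$. Then for every interval $[a,b]$ with $0\le a\le b$, $$\mathbf{P}\Big[\sum_{i=1}^{d-1}U_i^q\in[a,b]\Big]\le b^{(d-1)/q}-a^{(d-1)/q}.$$ *)

theory Defs
  imports "HOL-Probability.Probability"
begin

end

theory Submission
  imports Defs "HOL-Probability.Probability"
begin


abbreviation U01 :: "real measure" where "U01 \<equiv> uniform_measure lborel {0..1}"

lemma lborel_scale_preimage:
  fixes l :: real assumes "l > 0" and E: "E \<in> sets borel"
  shows "emeasure lborel ((*) l -` E) = ennreal (1/l) * emeasure lborel E"
proof -
  have "emeasure lborel ((*) l -` E) = emeasure (distr lborel borel ((*) l)) E"
    using E by (subst emeasure_distr) auto
  also have "\<dots> = emeasure (density lborel (\<lambda>_. ennreal (inverse \<bar>l\<bar>))) E"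
    using assms by (subst lborel_distr_mult) auto
  also have "\<dots> = ennreal (1/l) * emeasure lborel E"
    using E assms by (subst emeasure_density) (auto simp: nn_integral_cmult_indicator mult.commute[of "indicator E _"] inverse_eq_divide)
  finally show ?thesis .
qed

lemma U01_scale:
  fixes l :: real assumes l: "0 < l" "l \<le> 1"
  shows "distr U01 U01 ((*) l) = uniform_measure U01 {0..l}"
proof (rule measure_eqI)
  fix A assume A: "A \<in> sets (distr U01 U01 ((*) l))"
  then have A': "A \<in> sets borel" by simp
  have "emeasure (distr U01 U01 ((*) l)) A = emeasure U01 ((*) l -` A)"
    using A by (subst emeasure_distr) auto
  also have "\<dots> = emeasure lborel ({0..1} \<inter> (*) l -` A)"
  proof -
    have "(*) l -` A \<in> sets borel" using A' by (rule measurable_sets_borel[rotated]) simp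
    then show ?thesis by (simp add: divide_ennreal_def)
  qed
  also have "{0..1} \<inter> (*) l -` A = (*) l -` ({0..l} \<inter> A)"
    using l by (auto simp: field_simps mult_le_cancel_left1 zero_le_mult_iff)
  also have "emeasure lborel \<dots> = ennreal (1/l) * emeasure lborel ({0..l} \<inter> A)"
    using l A' by (intro lborel_scale_preimage) auto
  finally have L: "emeasure (distr U01 U01 ((*) l)) A = ennreal (1/l) * emeasure lborel ({0..l} \<inter> A)" .
  have "emeasure (uniform_measure U01 {0..l}) A = emeasure U01 ({0..l} \<inter> A) / emeasure U01 {0..l}"
    using A' by simp
  also have "\<dots> = emeasure lborel ({0..l} \<inter> A) / ennreal l"
    using A' l by (simp add: Int_absorb1 Int_commute Int_left_commute divide_ennreal_def)
  finally show "emeasure (distr U01 U01 ((*) l)) A = emeasure (uniform_measure U01 {0..l}) A"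
    using L l by (simp add: divide_ennreal_def ennreal_inverse_positive mult.commute inverse_ennreal inverse_eq_divide) 
qed simp


lemma ennreal_div1[simp]: "(x::ennreal) / 1 = x"
  by (simp add: divide_ennreal_def)

lemma U01_prob: "prob_space U01"
  by (rule prob_space_uniform_measure) auto

lemma U01_emeasure: "0 \<le> l \<Longrightarrow> l \<le> 1 \<Longrightarrow> emeasure U01 {0..l} = ennreal l"
  by (simp add: Int_absorb1 divide_ennreal_def)

lemma U01l_prob: "0 < l \<Longrightarrow> l \<le> 1 \<Longrightarrow> prob_space (uniform_measure U01 {0..l})"
  by (rule prob_space_uniform_measure) (auto simp: U01_emeasure)

lemma PiM_uniform:
  fixes I :: "'i set" and l :: real
  assumes I: "finite I" and l: "0 < l" "l \<le> 1"
  shows "uniform_measure (PiM I (\<lambda>_. U01)) (PiE I (\<lambda>_. {0..l})) = PiM I (\<lambda>_. uniform_measure U01 {0..l})"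
proof -
  interpret P: product_prob_space "\<lambda>_. U01" I
    by (intro product_prob_spaceI U01_prob)
  interpret Q: product_prob_space "\<lambda>_. uniform_measure U01 {0..l}" I
    by (intro product_prob_spaceI U01l_prob l)
  have B: "PiE I (\<lambda>_. {0..l}) \<in> sets (PiM I (\<lambda>_. U01))"
    by (rule sets_PiM_I_finite) (use I in auto)
  have EB: "emeasure (PiM I (\<lambda>_. U01)) (PiE I (\<lambda>_. {0..l})) = ennreal (l ^ card I)"
    using I l by (subst P.emeasure_PiM) (auto simp: U01_emeasure ennreal_power)
  show ?thesis
  proof (rule Q.PiM_eqI[OF I])
    show "sets (uniform_measure (PiM I (\<lambda>_. U01)) (PiE I (\<lambda>_. {0..l}))) = sets (PiM I (\<lambda>_. uniform_measure U01 {0..l}))"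
      by (simp cong: sets_PiM_cong)
  next
    fix A assume A: "\<And>i. i \<in> I \<Longrightarrow> A i \<in> sets (uniform_measure U01 {0..l})"
    have A': "PiE I A \<in> sets (PiM I (\<lambda>_. U01))"
      by (rule sets_PiM_I_finite) (use I A in auto)
    have "emeasure (uniform_measure (PiM I (\<lambda>_. U01)) (PiE I (\<lambda>_. {0..l}))) (PiE I A)
        = emeasure (PiM I (\<lambda>_. U01)) (PiE I (\<lambda>i. {0..l} \<inter> A i)) / ennreal (l ^ card I)"
      using B A' EB by (simp add: PiE_Int)
    also have "\<dots> = (\<Prod>i\<in>I. emeasure U01 ({0..l} \<inter> A i)) / ennreal (l ^ card I)"
      using I A by (subst P.emeasure_PiM) auto
    also have "\<dots> = (\<Prod>i\<in>I. emeasure U01 ({0..l} \<inter> A i) / ennreal l)"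
    proof -
      have "inverse (ennreal (l ^ card I)) = (\<Prod>i\<in>I. inverse (ennreal l))"
        using l by (simp add: ennreal_power[symmetric] ennreal_inverse_power prod_constant del: ennreal_power)
      then show ?thesis by (simp add: divide_ennreal_def prod.distrib)
    qed
    also have "\<dots> = (\<Prod>i\<in>I. emeasure (uniform_measure U01 {0..l}) (A i))"
      using A l by (intro prod.cong) (auto simp: U01_emeasure)
    finally show "emeasure (uniform_measure (PiM I (\<lambda>_. U01)) (PiE I (\<lambda>_. {0..l}))) (PiE I A)
        = (\<Prod>i\<in>I. emeasure (uniform_measure U01 {0..l}) (A i))" .
  qed
qed



lemma PiM_scale:
  fixes I :: "'i set" and l :: real
  assumes I: "finite I" and l: "0 < l" "l \<le> 1"
    and E: "E \<in> sets (PiM I (\<lambda>_. U01))"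
  shows "measure (PiM I (\<lambda>_. U01)) (E \<inter> PiE I (\<lambda>_. {0..l}))
     = l ^ card I * measure (PiM I (\<lambda>_. U01)) ((\<lambda>x. \<lambda>i\<in>I. l * x i) -` E \<inter> space (PiM I (\<lambda>_. U01)))"
proof -
  let ?N = "PiM I (\<lambda>_. U01)"
  let ?B = "PiE I (\<lambda>_. {0..l})"
  interpret P: product_prob_space "\<lambda>_. U01" I
    by (intro product_prob_spaceI U01_prob)
  have B: "?B \<in> sets ?N"
    by (rule sets_PiM_I_finite) (use I in auto)
  have EB: "emeasure ?N ?B = ennreal (l ^ card I)"
    using I l by (subst P.emeasure_PiM) (auto simp: U01_emeasure ennreal_power)
  then have MB: "measure ?N ?B = l ^ card I"
    using l by (simp add: measure_def)
  have D: "distr ?N ?N (compose I ((*) l)) = PiM I (\<lambda>i. distr U01 U01 ((*) l))"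
    by (rule distr_PiM_finite_prob_space[OF I]) (auto intro: product_prob_spaceI U01_prob)
  also have "\<dots> = PiM I (\<lambda>_. uniform_measure U01 {0..l})"
    using l by (simp add: U01_scale)
  also have "\<dots> = uniform_measure ?N ?B"
    using PiM_uniform[OF I l] by simp
  finally have D: "distr ?N ?N (compose I ((*) l)) = uniform_measure ?N ?B" .
  have "measure (uniform_measure ?N ?B) E = measure ?N (?B \<inter> E) / measure ?N ?B"
    using EB l E by (intro measure_uniform_measure) auto
  also have "measure (uniform_measure ?N ?B) E = measure (distr ?N ?N (compose I ((*) l))) E"
    using D by simp
  also have "\<dots> = measure ?N (compose I ((*) l) -` E \<inter> space ?N)"
  proof (rule measure_distr)
    show "compose I ((*) l) \<in> measurable ?N ?N"
      unfolding compose_def by (intro measurable_restrict) simp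
  qed (use E in auto)
  moreover have "compose I ((*) l) = (\<lambda>x. \<lambda>i\<in>I. l * x i)"
    by (auto simp: compose_def fun_eq_iff)
  ultimately show ?thesis
    using MB l by (simp add: Int_commute field_simps)
qed



lemma main_PiM:
  fixes I :: "'i set" and q a b :: real
  assumes I: "finite I" "I \<noteq> {}" and q: "q \<ge> 1" and ab: "0 \<le> a" "a \<le> b"
  shows "measure (PiM I (\<lambda>_. U01)) {x \<in> space (PiM I (\<lambda>_. U01)). (\<Sum>i\<in>I. x i powr q) \<in> {a..b}}
     \<le> b powr (real (card I) / q) - a powr (real (card I) / q)"
proof -
  let ?N = "PiM I (\<lambda>_. U01)"
  define n where "n = card I"
  define p where "p = real n / q"
  have n: "n \<ge> 1" using I by (simp add: n_def Suc_le_eq card_gt_0_iff)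
  have p: "p > 0" using n q by (simp add: p_def)
  interpret P: product_prob_space "\<lambda>_. U01" I
    by (intro product_prob_spaceI U01_prob)
  have Nprob: "prob_space ?N"
    by (intro prob_space_PiM U01_prob)
  define S where "S x = (\<Sum>i\<in>I. x i powr q)" for x :: "'i \<Rightarrow> real"
  define F where "F t = {x \<in> space ?N. S x \<le> t}" for t
  define C where "C = PiE I (\<lambda>_. {0..1::real})"
  have S_meas[measurable]: "S \<in> borel_measurable ?N"
    unfolding S_def by measurable
  have F_sets[measurable]: "F t \<in> sets ?N" for t
    unfolding F_def by measurable
  have C_sets[measurable]: "C \<in> sets ?N"
    unfolding C_def by (rule sets_PiM_I_finite) (use I in auto)
  have "emeasure ?N C = 1"
    unfolding C_def using I by (subst P.emeasure_PiM) (auto simp: U01_emeasure)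
  then have AEC: "AE x in ?N. x \<in> C"
    by (intro prob_space.AE_prob_1[OF Nprob]) (simp add: measure_def)
  have restrictC: "measure ?N E = measure ?N (E \<inter> C)" if [measurable]: "E \<in> sets ?N" for E
    by (rule measure_eq_AE) (use AEC in auto)
  have Sge: "x i powr q \<le> S x" if "x \<in> C" "i \<in> I" for x i
    unfolding S_def using that I by (intro member_le_sum) auto
  have G: "measure ?N (F t) \<le> t powr p" if t: "t \<ge> 0" for t
  proof (cases "t \<ge> 1")
    case True
    then have "1 \<le> t powr p" using p by (simp add: ge_one_powr_ge_zero)
    then show ?thesis using prob_space.prob_le_1[OF Nprob, of "F t"] by linarith
  next
    case False
    define c where "c = t powr (1/q)"
    have c: "0 \<le> c" "c \<le> 1" using False t q unfolding c_def
      using powr_mono2[of "1/q" t 1] by auto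
    have sub: "F t \<inter> C \<subseteq> PiE I (\<lambda>_. {0..c})"
    proof
      fix x assume x: "x \<in> F t \<inter> C"
      have "x i \<le> c" if i: "i \<in> I" for i
      proof -
        have xi: "0 \<le> x i" using x i by (auto simp: C_def)
        have "x i powr q \<le> t" using Sge[of x i] x i by (auto simp: F_def)
        then have "(x i powr q) powr (1/q) \<le> t powr (1/q)"
          using xi q by (intro powr_mono2) auto
        then show ?thesis using xi q by (simp add: powr_powr c_def)
      qed
      then show "x \<in> PiE I (\<lambda>_. {0..c})" using x by (auto simp: C_def)
    qed
    have "measure ?N (F t) = measure ?N (F t \<inter> C)" by (rule restrictC) simp
    also have "\<dots> \<le> measure ?N (PiE I (\<lambda>_. {0..c}))"
      using sub I by (intro finite_measure.finite_measure_mono[OF prob_space.finite_measure[OF Nprob]] sets_PiM_I_finite) auto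
    also have "measure ?N (PiE I (\<lambda>_. {0..c})) = c ^ n"
      using I c by (simp add: measure_def P.emeasure_PiM U01_emeasure n_def prod_ennreal[symmetric]
          ennreal_power)
    also have "c ^ n = t powr p"
    proof (cases "t = 0")
      case True then show ?thesis using n p by (simp add: c_def)
    next
      case False
      then have "c ^ n = c powr real n" using t by (simp add: c_def powr_realpow)
      then show ?thesis using t q by (simp add: c_def p_def powr_powr)
    qed
    finally show ?thesis .
  qed
  have scal: "(a'/b') powr p * measure ?N (F b') \<le> measure ?N (F a')"
    if ab': "0 < a'" "a' \<le> b'" for a' b'
  proof -
    define l where "l = (a'/b') powr (1/q)"
    have l: "0 < l" "l \<le> 1" using ab' q unfolding l_def
      using powr_mono2[of "1/q" "a'/b'" 1] by auto
    have lq: "l powr q = a'/b'" using ab' q by (simp add: l_def powr_powr)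
    have ln: "l ^ n = (a'/b') powr p"
      using l ab' q by (simp add: powr_realpow[symmetric] l_def powr_powr p_def)
    define T where "T x = (\<lambda>i\<in>I. l * x i)" for x :: "'i \<Rightarrow> real"
    have eq: "T -` F a' \<inter> space ?N \<inter> C = F b' \<inter> C"
    proof -
      have "S (T x) = (a'/b') * S x" if "x \<in> C" for x
      proof -
        have "S (T x) = (\<Sum>i\<in>I. l powr q * x i powr q)"
          unfolding S_def T_def using that l by (intro sum.cong) (auto simp: C_def powr_mult)
        then show ?thesis by (simp add: lq S_def sum_distrib_left)
      qed
      moreover have "T x \<in> space ?N" for x by (simp add: T_def space_PiM)
      moreover have "S (T x) \<le> a' \<longleftrightarrow> S x \<le> b'" if "x \<in> C" for x
      proof -
        have "S (T x) \<le> a' \<longleftrightarrow> (a'/b') * S x \<le> (a'/b') * b'"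
          using \<open>\<And>x. x \<in> C \<Longrightarrow> S (T x) = (a'/b') * S x\<close>[OF that] ab' by simp
        also have "\<dots> \<longleftrightarrow> S x \<le> b'"
          using ab' by (intro mult_le_cancel_left_pos) simp
        finally show ?thesis .
      qed
      ultimately show ?thesis by (auto simp: F_def)
    qed
    have Tm: "T -` F a' \<inter> space ?N \<in> sets ?N"
    proof -
      have "T \<in> measurable ?N ?N" unfolding T_def by (intro measurable_restrict) simp
      then show ?thesis by (rule measurable_sets) simp
    qed
    have "(a'/b') powr p * measure ?N (F b') = l ^ n * measure ?N (F b' \<inter> C)"
      using restrictC[of "F b'"] ln by simp
    also have "\<dots> = l ^ n * measure ?N (T -` F a' \<inter> space ?N)"
      using restrictC[OF Tm] eq by simp
    also have "\<dots> = measure ?N (F a' \<inter> PiE I (\<lambda>_. {0..l}))"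
    proof -
      have "T = (\<lambda>x. \<lambda>i\<in>I. l * x i)" by (simp add: T_def fun_eq_iff)
      then show ?thesis using PiM_scale[OF I(1) l, of "F a'"] by (simp add: n_def)
    qed
    also have "\<dots> \<le> measure ?N (F a')"
      by (intro finite_measure.finite_measure_mono[OF prob_space.finite_measure[OF Nprob]]) auto
    finally show ?thesis .
  qed
  define A0 where "A0 = {x \<in> space ?N. S x \<in> {a..b}}"
  have A0m: "A0 \<in> sets ?N" unfolding A0_def by measurable
  have "measure ?N A0 \<le> b powr p - a powr p"
  proof (cases "a = 0")
    case True
    have "measure ?N A0 \<le> measure ?N (F b)"
      by (intro finite_measure.finite_measure_mono[OF prob_space.finite_measure[OF Nprob]])
        (auto simp: A0_def F_def)
    also have "\<dots> \<le> b powr p" using G ab by simp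
    finally show ?thesis using True by simp
  next
    case False
    then have a0: "a > 0" using ab by simp
    have bnd: "measure ?N A0 \<le> b powr p - a' powr p" if a': "0 < a'" "a' < a" for a'
    proof -
      have "measure ?N A0 \<le> measure ?N (F b - F a')"
        using a' by (intro finite_measure.finite_measure_mono[OF prob_space.finite_measure[OF Nprob]])
          (auto simp: A0_def F_def)
      also have "\<dots> = measure ?N (F b) - measure ?N (F a')"
        using a' ab by (intro finite_measure.finite_measure_Diff[OF prob_space.finite_measure[OF Nprob]])
          (auto simp: F_def)
      also have "\<dots> \<le> measure ?N (F b) - (a'/b) powr p * measure ?N (F b)"
        using scal[of a' b] a' ab by simp
      also have "\<dots> = (1 - (a'/b) powr p) * measure ?N (F b)" by (simp add: algebra_simps)
      also have "\<dots> \<le> (1 - (a'/b) powr p) * b powr p"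
      proof (rule mult_left_mono)
        show "measure ?N (F b) \<le> b powr p" using G ab by simp
        have "(a'/b) powr p \<le> 1 powr p" using a' ab p by (intro powr_mono2) auto
        then show "0 \<le> 1 - (a'/b) powr p" by simp
      qed
      also have "\<dots> = b powr p - a' powr p"
        using a' ab by (simp add: powr_divide algebra_simps)
      finally show ?thesis .
    qed
    have lim: "((\<lambda>a'. b powr p - a' powr p) \<longlongrightarrow> b powr p - a powr p) (at_left a)"
      using a0 by (intro tendsto_intros) auto
    show ?thesis
    proof (rule tendsto_lowerbound[OF lim])
      show "\<forall>\<^sub>F a' in at_left a. measure ?N A0 \<le> b powr p - a' powr p"
        using eventually_at_left_real[OF a0] by eventually_elim (auto intro: bnd)
    qed simp
  qed
  then show ?thesis by (simp add: A0_def S_def p_def n_def)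
qed


theorem lemma5p4:
  fixes M :: "'a measure" and U :: "nat \<Rightarrow> 'a \<Rightarrow> real"
    and d :: nat and q a b :: real
  assumes "prob_space M"
    and "d \<ge> 2"
    and "prob_space.indep_vars M (\<lambda>_. borel) U {1..d-1}"
    and "\<And>i. i \<in> {1..d-1} \<Longrightarrow> distr M lborel (U i) = uniform_measure lborel {0..1}"
    and "q \<ge> 1"
    and "0 \<le> a" and "a \<le> b"
  shows "measure M {\<omega> \<in> space M. (\<Sum>i=1..d-1. U i \<omega> powr q) \<in> {a..b}}
           \<le> b powr (real (d-1) / q) - a powr (real (d-1) / q)"
proof -
  interpret prob_space M by fact
  define I where "I = {1..d-1}"
  have I: "finite I" "I \<noteq> {}" "card I = d - 1" using assms(2) by (auto simp: I_def)
  have rv: "\<And>i. i \<in> I \<Longrightarrow> random_variable borel (U i)"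
    using assms(3) by (auto simp: indep_vars_def I_def)
  have D: "distr M (PiM I (\<lambda>_. borel)) (\<lambda>x. \<lambda>i\<in>I. U i x) = PiM I (\<lambda>i. distr M borel (U i))"
    using indep_vars_iff_distr_eq_PiM'[OF I(2) rv] assms(3) by (simp add: I_def)
  also have "\<dots> = PiM I (\<lambda>_. U01)"
  proof (rule PiM_cong)
    fix i assume i: "i \<in> I"
    have "distr M borel (U i) = distr M lborel (U i)" by (rule distr_cong) auto
    then show "distr M borel (U i) = U01" using assms(4) i by (simp add: I_def)
  qed simp
  finally have D: "distr M (PiM I (\<lambda>_. borel)) (\<lambda>x. \<lambda>i\<in>I. U i x) = PiM I (\<lambda>_. U01)" .
  let ?X = "\<lambda>x. \<lambda>i\<in>I. U i x"
  let ?N = "PiM I (\<lambda>_. U01)"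
  have Xm: "?X \<in> measurable M (PiM I (\<lambda>_. borel))"
    by (intro measurable_restrict rv)
  have Em: "{x \<in> space ?N. (\<Sum>i\<in>I. x i powr q) \<in> {a..b}} \<in> sets (PiM I (\<lambda>_. borel))"
  proof -
    have "{x \<in> space ?N. (\<Sum>i\<in>I. x i powr q) \<in> {a..b}} \<in> sets ?N" by measurable
    moreover have "sets ?N = sets (PiM I (\<lambda>_. borel))" by (intro sets_PiM_cong) auto
    ultimately show ?thesis by simp
  qed
  have "measure ?N {x \<in> space ?N. (\<Sum>i\<in>I. x i powr q) \<in> {a..b}}
      = measure M (?X -` {x \<in> space ?N. (\<Sum>i\<in>I. x i powr q) \<in> {a..b}} \<inter> space M)"
    unfolding D[symmetric] using Xm Em by (intro measure_distr) auto
  also have "?X -` {x \<in> space ?N. (\<Sum>i\<in>I. x i powr q) \<in> {a..b}} \<inter> space M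
      = {\<omega> \<in> space M. (\<Sum>i=1..d-1. U i \<omega> powr q) \<in> {a..b}}"
    by (auto simp: I_def space_PiM)
  finally show ?thesis
    using main_PiM[OF I(1,2) assms(5,6,7)] I(3) by simp
qed

end
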